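(* Let $\Lambda=(0,\infty)$ and let $\chi\colon\Lambda\to\mathbb{R}^3_+$ be continuous, bounded, with $\operatorname{supp}\chi=[0,1]$ and $\chi(\lambda)\ne\mathbf{0}$ on $(0,1)$; let $\eta=\chi/\langle\mathbf{1},\chi\rangle$ on $(0,1)$, extended continuously to $[0,1]$. Let $\mathcal{P}$, $A$, $\mathcal{T}$ be as in the context. Let $\mu$ be a finite nonnegative Borel measure on $\Lambda$ with $\tilde\mu=\langle\chi(\cdot),\mathbf{1}\rangle\mu$ satisfying $\tilde\mu(\Lambda)=1$ and $\operatorname{supp}\tilde\mu=[0,1]$. Assume the spectral locus is strictly convex. Let $f,g$ be $\tilde\mu$-integrable functions with $\int f\,\mathrm{d}\tilde\mu=\int g\,\mathrm{d}\tilde\mu=1$ such that $f-g$ changes sign twice on $[0,1]$. Then $\mathbf{c}_\mu(f)\neq\mathbf{c}_\mu(g)$, where $\mathbf{c}_\mu(f)=\int_{[0,1]}f\eta\,\mathrm{d}\tilde\mu$.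
   Context: $\mathcal{P}=\{\int\chi\,\mathrm{d}\nu:\nu$ finite nonnegative Borel measure on $\Lambda\}$ is assumed to have nonempty interior; $A=\{\mathbf{x}\in\mathbb{R}^3:\langle\mathbf{x},\mathbf{1}\rangle=1\}$; $\mathcal{T}=\mathcal{P}\cap A$, regarded as a subset of $A$ with its relative topology. Fix a direction and orientation in $A$; $\angle(\mathbf{c}',\mathbf{c})$ is the angle from $\mathbf{c}$ to $\mathbf{c}'$. A cyclic interval in $[0,1]$: $[a,b]_{\mathbb{T}}=[a,b]$ if $a\le b$, $=[a,1]\cup[0,b]$ if $a>b$, and analogously for open/half-open ones. The spectral locus $\eta([0,1])$ is convex if $\eta([0,1])\subset\partial\mathcal{T}$ and for every $\mathbf{c}\in\operatorname{int}\mathcal{T}$ a continuous version of $\lambda\mapsto\angle(\eta(\lambda),\mathbf{c})$ is monotone on $[0,1]$ with $|\angle(\eta(0),\mathbf{c})-\angle(\eta(1),\mathbf{c})|\le2\pi$; it is strictly convex if moreover $\eta(\lambda)\notin[\eta(a),\eta(b)]$ for all pairwise distinct $a,b,\lambda\in[0,1]$ ($[\mathbf{x},\mathbf{y}]$ the closed segment). A $\tilde\mu$-measurable function $u$ on $[0,1]$ changes sign twice on $[0,1]$ if $\tilde\mu(\{u>0\})>0$, $\tilde\mu(\{u<0\})>0$, and there is a cyclic interval $I\subset[0,1]$ such that both $I$ and $[0,1]\setminus I$ have nonempty interior, $u\ge0$ on $I$ and $u\le0$ outside $I$. *)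

theory Defs
  imports "HOL-Analysis.Analysis"
begin

definition ones3 :: "real^3" where "ones3 = (\<chi> i. 1)"

definition Lam :: "real set" where "Lam = {0<..}"

definition Pcone :: "(real \<Rightarrow> real^3) \<Rightarrow> (real^3) set" where
  "Pcone chi = {integral\<^sup>L \<nu> chi | \<nu>. sets \<nu> = sets (restrict_space borel Lam) \<and> finite_measure \<nu>}"

definition Aplane :: "(real^3) set" where "Aplane = {x. x \<bullet> ones3 = 1}"

definition Tset :: "(real \<Rightarrow> real^3) \<Rightarrow> (real^3) set" where
  "Tset chi = Pcone chi \<inter> Aplane"

definition topA :: "(real^3) topology" where "topA = subtopology euclidean Aplane"

text \<open>Fixed orthonormal basis of the direction space of A, giving a direction and orientation;
  a vector parallel to A is mapped to a complex number.\<close>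
definition planeE1 :: "real^3" where "planeE1 = (1 / sqrt 2) *\<^sub>R vector [1, -1, 0]"
definition planeE2 :: "real^3" where "planeE2 = (1 / sqrt 6) *\<^sub>R vector [1, 1, -2]"
definition plane_coord :: "real^3 \<Rightarrow> complex" where
  "plane_coord v = Complex (v \<bullet> planeE1) (v \<bullet> planeE2)"

text \<open>\<open>\<theta>\<close> is a continuous version on [0,1] of \<open>\<lambda> \<mapsto> \<angle>(p \<lambda>, c)\<close>, the angle from c to p \<lambda>.\<close>
definition angle_version :: "(real \<Rightarrow> real^3) \<Rightarrow> real^3 \<Rightarrow> (real \<Rightarrow> real) \<Rightarrow> bool" where
  "angle_version p c \<theta> \<longleftrightarrow> continuous_on {0..1} \<theta> \<and>
     (\<forall>l\<in>{0..1}. plane_coord (p l - c) = complex_of_real (cmod (plane_coord (p l - c))) * cis (\<theta> l))"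

definition convex_locus :: "(real \<Rightarrow> real^3) \<Rightarrow> (real \<Rightarrow> real^3) \<Rightarrow> bool" where
  "convex_locus chi eta \<longleftrightarrow>
     eta ` {0..1} \<subseteq> topA frontier_of (Tset chi) \<and>
     (\<forall>c \<in> topA interior_of (Tset chi). \<exists>\<theta>. angle_version eta c \<theta> \<and>
        (mono_on {0..1} \<theta> \<or> antimono_on {0..1} \<theta>) \<and> \<bar>\<theta> 0 - \<theta> 1\<bar> \<le> 2 * pi)"

definition strictly_convex_locus :: "(real \<Rightarrow> real^3) \<Rightarrow> (real \<Rightarrow> real^3) \<Rightarrow> bool" where
  "strictly_convex_locus chi eta \<longleftrightarrow> convex_locus chi eta \<and>
     (\<forall>a\<in>{0..1}. \<forall>b\<in>{0..1}. \<forall>l\<in>{0..1}. a \<noteq> b \<and> a \<noteq> l \<and> b \<noteq> l \<longrightarrow>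
        eta l \<notin> closed_segment (eta a) (eta b))"

definition cyc_cc :: "real \<Rightarrow> real \<Rightarrow> real set" where
  "cyc_cc a b = (if a \<le> b then {a..b} else {a..1} \<union> {0..b})"
definition cyc_oo :: "real \<Rightarrow> real \<Rightarrow> real set" where
  "cyc_oo a b = (if a \<le> b then {a<..<b} else {a<..1} \<union> {0..<b})"
definition cyc_co :: "real \<Rightarrow> real \<Rightarrow> real set" where
  "cyc_co a b = (if a \<le> b then {a..<b} else {a..1} \<union> {0..<b})"
definition cyc_oc :: "real \<Rightarrow> real \<Rightarrow> real set" where
  "cyc_oc a b = (if a \<le> b then {a<..b} else {a<..1} \<union> {0..b})"

definition cyclic_interval :: "real set \<Rightarrow> bool" where
  "cyclic_interval I \<longleftrightarrow> (\<exists>a\<in>{0..1}. \<exists>b\<in>{0..1}.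
      I = cyc_cc a b \<or> I = cyc_oo a b \<or> I = cyc_co a b \<or> I = cyc_oc a b)"

text \<open>u changes sign twice on [0,1] (w.r.t. the measure M on \<open>\<Lambda>\<close>); pointwise conditions are
  imposed at points of \<open>[0,1] \<inter> \<Lambda>\<close>, where u is defined.\<close>
definition changes_sign_twice :: "real measure \<Rightarrow> (real \<Rightarrow> real) \<Rightarrow> bool" where
  "changes_sign_twice M u \<longleftrightarrow>
     emeasure M {x \<in> space M. u x > 0} > 0 \<and> emeasure M {x \<in> space M. u x < 0} > 0 \<and>
     (\<exists>I. cyclic_interval I \<and> interior I \<noteq> {} \<and> interior ({0..1} - I) \<noteq> {} \<and>
        (\<forall>x\<in>I \<inter> Lam. u x \<ge> 0) \<and> (\<forall>x\<in>({0..1} - I) \<inter> Lam. u x \<le> 0))"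

text \<open>Closed support (in R) of a measure on \<open>\<Lambda>\<close>.\<close>
definition msupp :: "real measure \<Rightarrow> real set" where
  "msupp M = {x. \<forall>e>0. emeasure M (ball x e \<inter> space M) > 0}"

definition mu_tilde :: "(real \<Rightarrow> real^3) \<Rightarrow> real measure \<Rightarrow> real measure" where
  "mu_tilde chi \<mu> = density \<mu> (\<lambda>x. ennreal (chi x \<bullet> ones3))"

definition c_mu :: "(real \<Rightarrow> real^3) \<Rightarrow> (real \<Rightarrow> real^3) \<Rightarrow> real measure \<Rightarrow> (real \<Rightarrow> real) \<Rightarrow> real^3" where
  "c_mu chi eta \<mu> f = (LINT x:{0..1}|mu_tilde chi \<mu>. f x *\<^sub>R eta x)"

end

theory Submission
  imports Defs
begin


definition orient :: "real^3 \<Rightarrow> real^3 \<Rightarrow> real^3 \<Rightarrow> real" where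
  "orient x y z = (y$1 - x$1)*(z$2 - x$2) - (y$2 - x$2)*(z$1 - x$1)"

lemma inner_ones3: "x \<bullet> ones3 = x$1 + x$2 + x$3"
  by (simp add: ones3_def inner_vec_def sum_3)

lemma orient_swap: "orient x z y = - orient x y z"
  by (simp add: orient_def algebra_simps)
lemma orient_cyc: "orient y z x = orient x y z"
  by (simp add: orient_def algebra_simps)

definition linw :: "real^3 \<Rightarrow> real^3 \<Rightarrow> real^3" where
  "linw x y = vector [(x$2 - y$2) + ((y$2 - x$2)*x$1 - (y$1 - x$1)*x$2),
     (y$1 - x$1) + ((y$2 - x$2)*x$1 - (y$1 - x$1)*x$2), (y$2 - x$2)*x$1 - (y$1 - x$1)*x$2]"

lemma orient_lin:
  assumes "z \<bullet> ones3 = 1"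
  shows "orient x y z = linw x y \<bullet> z"
proof -
  have "z$3 = 1 - z$1 - z$2" using assms unfolding inner_ones3 by simp
  then show ?thesis unfolding orient_def linw_def inner_vec_def sum_3 vector_3 inner_real_def by algebra
qed

lemma collinear_param:
  assumes x: "x \<bullet> ones3 = 1" and y: "y \<bullet> ones3 = 1" and z: "z \<bullet> ones3 = 1"
    and xy: "x \<noteq> y" and o: "orient x y z = 0"
  obtains t where "z = x + t *\<^sub>R (y - x)"
proof -
  define d1 where "d1 = y$1 - x$1"
  define d2 where "d2 = y$2 - x$2"
  define e1 where "e1 = z$1 - x$1"
  define e2 where "e2 = z$2 - x$2"
  have x3: "x$3 = 1 - x$1 - x$2" using x unfolding inner_ones3 by simp
  have y3: "y$3 = 1 - y$1 - y$2" using y unfolding inner_ones3 by simp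
  have z3: "z$3 = 1 - z$1 - z$2" using z unfolding inner_ones3 by simp
  have nz: "d1\<^sup>2 + d2\<^sup>2 \<noteq> 0"
  proof
    assume "d1\<^sup>2 + d2\<^sup>2 = 0"
    then have "d1 = 0" "d2 = 0" by (auto simp: add_nonneg_eq_0_iff)
    then have "x = y" using x3 y3 unfolding d1_def d2_def by (simp add: vec_eq_iff forall_3)
    then show False using xy by simp
  qed
  define t where "t = (e1*d1 + e2*d2) / (d1\<^sup>2 + d2\<^sup>2)"
  have oe: "d1 * e2 = d2 * e1" using o unfolding orient_def d1_def d2_def e1_def e2_def by simp
  have c1: "e1 = t * d1"
    using nz oe unfolding t_def by (simp add: field_simps power2_eq_square)
  have c2: "e2 = t * d2"
    using nz oe unfolding t_def by (simp add: field_simps power2_eq_square)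
  have "z = x + t *\<^sub>R (y - x)"
    using c1 c2 x3 y3 z3 unfolding d1_def d2_def e1_def e2_def
    apply (simp add: vec_eq_iff forall_3 algebra_simps)
    by algebra
  then show ?thesis using that by blast
qed

lemma collinear_seg:
  assumes x: "x \<bullet> ones3 = 1" and y: "y \<bullet> ones3 = 1" and z: "z \<bullet> ones3 = 1"
    and xy: "x \<noteq> y" and o: "orient x y z = 0"
  shows "z \<in> closed_segment x y \<or> y \<in> closed_segment x z \<or> x \<in> closed_segment z y"
proof -
  obtain t where zt: "z = x + t *\<^sub>R (y - x)" using collinear_param[OF assms] by blast
  consider "0 \<le> t" "t \<le> 1" | "t > 1" | "t < 0" by linarith
  then show ?thesis
  proof cases
    case 1
    have "z = (1 - t) *\<^sub>R x + t *\<^sub>R y" using zt by (simp add: algebra_simps)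
    then show ?thesis using 1 unfolding closed_segment_def by blast
  next
    case 2
    have "(1/t) *\<^sub>R z = (1/t) *\<^sub>R x + (y - x)" using zt 2 by (simp add: scaleR_add_right scaleR_diff_right)
    then have "y = (1 - 1/t) *\<^sub>R x + (1/t) *\<^sub>R z" by (simp add: algebra_simps)
    moreover have "0 \<le> 1/t" "1/t \<le> 1" using 2 by auto
    ultimately show ?thesis unfolding closed_segment_def by blast
  next
    case 3
    have e: "(1-t) *\<^sub>R x = z + (-t) *\<^sub>R y" using zt by (simp add: algebra_simps)
    have "x = (1/(1-t)) *\<^sub>R ((1-t) *\<^sub>R x)" using 3 by simp
    also have "\<dots> = (1/(1-t)) *\<^sub>R z + (-t/(1-t)) *\<^sub>R y" unfolding e by (simp add: scaleR_add_right scaleR_diff_right)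
    also have "1/(1-t) = 1 - (-t/(1-t))" using 3 by (simp add: divide_simps)
    finally have "x = (1 - (-t/(1-t))) *\<^sub>R z + (-t/(1-t)) *\<^sub>R y" .
    moreover have "0 \<le> -t/(1-t)" "-t/(1-t) \<le> 1" using 3 by (auto simp: divide_simps)
    ultimately show ?thesis unfolding closed_segment_def by blast
  qed
qed


lemma cont_line:
  fixes e :: "real \<Rightarrow> real^3"
  assumes cont: "continuous_on {0..1} e" and a: "a \<in> {0..1}" and b: "b \<in> {0..1}"
  shows "continuous_on {0..1} (\<lambda>t. e (a + t * (b - a)))"
proof (rule continuous_on_compose2[OF cont])
  show "continuous_on {0..1} (\<lambda>t. a + t * (b - a))" by (intro continuous_intros)
  show "(\<lambda>t. a + t * (b - a)) ` {0..1} \<subseteq> {0..1}"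
  proof clarsimp
    fix t :: real assume t: "0 \<le> t" "t \<le> 1"
    have "a + t * (b - a) = (1 - t) * a + t * b" by (simp add: algebra_simps)
    moreover have "0 \<le> (1 - t) * a + t * b" using a b t by simp
    moreover have "(1 - t) * a + t * b \<le> (1 - t) * 1 + t * 1"
      using a b t by (intro add_mono mult_left_mono) auto
    ultimately show "0 \<le> a + t * (b - a) \<and> a + t * (b - a) \<le> 1" by simp
  qed
qed

lemma cont_orient_line:
  fixes e :: "real \<Rightarrow> real^3"
  assumes cont: "continuous_on {0..1} e"
    and "a1 \<in> {0..1}" "b1 \<in> {0..1}" "a2 \<in> {0..1}" "b2 \<in> {0..1}" "a3 \<in> {0..1}" "b3 \<in> {0..1}"
  shows "continuous_on {0..1} (\<lambda>t. orient (e (a1 + t * (b1 - a1))) (e (a2 + t * (b2 - a2))) (e (a3 + t * (b3 - a3))))"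
proof -
  note h = continuous_on_component[OF cont_line[OF cont assms(2,3)]]
    continuous_on_component[OF cont_line[OF cont assms(4,5)]]
    continuous_on_component[OF cont_line[OF cont assms(6,7)]]
  show ?thesis unfolding orient_def by (intro continuous_intros h)
qed

lemma orient_sign:
  fixes e :: "real \<Rightarrow> real^3"
  assumes cont: "continuous_on {0..1} e"
    and nz: "\<forall>p\<in>{0..1}. \<forall>q\<in>{0..1}. \<forall>r\<in>{0..1}. p \<noteq> q \<and> p \<noteq> r \<and> q \<noteq> r \<longrightarrow> orient (e p) (e q) (e r) \<noteq> 0"
  obtains s :: real where "s = 1 \<or> s = -1"
    "\<And>p q r. 0 \<le> p \<Longrightarrow> p < q \<Longrightarrow> q < r \<Longrightarrow> r \<le> 1 \<Longrightarrow> s * orient (e p) (e q) (e r) > 0"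
proof -
  define F where "F = (\<lambda>p q r. orient (e p) (e q) (e r))"
  define s :: real where "s = (if F 0 (1/2) 1 > 0 then 1 else -1)"
  have F0: "F 0 (1/2) 1 \<noteq> 0" using nz unfolding F_def by auto
  have s0: "s * F 0 (1/2) 1 > 0" using F0 unfolding s_def by auto
  have "s * F p q r > 0" if pqr: "0 \<le> p" "p < q" "q < r" "r \<le> 1" for p q r
  proof (rule ccontr)
    assume neg: "\<not> s * F p q r > 0"
    define g where "g = (\<lambda>t. s * F (0 + t * (p - 0)) (1/2 + t * (q - 1/2)) (1 + t * (r - 1)))"
    have gc: "continuous_on {0..1} g" unfolding g_def F_def
      using pqr by (intro continuous_intros cont_orient_line[OF cont]) auto
    have "g 1 \<le> 0" "0 \<le> g 0" using neg s0 unfolding g_def by auto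
    then obtain t where t: "0 \<le> t" "t \<le> 1" "g t = 0" using IVT2'[where f=g and a=0 and b=1 and y=0] gc by auto
    define p' q' r' where "p' = 0 + t * (p - 0)" and "q' = 1/2 + t * (q - 1/2)" and "r' = 1 + t * (r - 1)"
    have pe: "p' = (1 - t) * 0 + t * p" and qe: "q' = (1 - t) * (1/2) + t * q" and re: "r' = (1 - t) * 1 + t * r"
      unfolding p'_def q'_def r'_def by (simp_all add: algebra_simps field_simps)
    have lt: "p' < q' \<and> q' < r'"
    proof (cases "t = 0")
      case True then show ?thesis using pe qe re by simp
    next
      case False
      then have "t > 0" using t by simp
      then have "t * p < t * q" "t * q < t * r" using pqr by simp_all
      moreover have "(1 - t) * 0 \<le> (1 - t) * (1/2)" "(1 - t) * (1/2) \<le> (1 - t) * 1" using t by simp_all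
      ultimately show ?thesis using pe qe re by linarith
    qed
    have rng: "p' \<in> {0..1}" "r' \<in> {0..1}"
    proof -
      have "t * p \<ge> 0" "t * r \<le> t * 1" "t * r \<ge> 0" "t * p \<le> t * 1" using t pqr by (auto intro: mult_left_mono mult_left_le)
      then show "p' \<in> {0..1}" "r' \<in> {0..1}" using pe re t by auto
    qed
    have "F p' q' r' \<noteq> 0" using nz lt rng unfolding F_def by auto
    moreover have "g t = s * F p' q' r'" unfolding g_def p'_def q'_def r'_def by simp
    ultimately show False using t s0 F0 unfolding s_def by (auto split: if_splits)
  qed
  then show ?thesis using that[of s] unfolding s_def F_def by auto
qed



lemma M_facts:
  assumes "sets \<mu> = sets (restrict_space borel Lam)"
  shows "space (mu_tilde chi \<mu>) = Lam" "sets (mu_tilde chi \<mu>) = sets (restrict_space borel Lam)"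
proof -
  show "sets (mu_tilde chi \<mu>) = sets (restrict_space borel Lam)"
    using assms unfolding mu_tilde_def by simp
  then have "space (mu_tilde chi \<mu>) = space (restrict_space borel Lam)"
    by (rule sets_eq_imp_space_eq)
  then show "space (mu_tilde chi \<mu>) = Lam" by (simp add: space_restrict_space)
qed

lemma borel_to_M:
  assumes "sets M = sets (restrict_space borel Lam)" "h \<in> borel_measurable borel"
  shows "h \<in> borel_measurable M"
proof -
  have "h \<in> borel_measurable (restrict_space borel Lam)"
    using assms(2) by (rule measurable_restrict_space1)
  then show ?thesis by (subst measurable_cong_sets[OF assms(1) refl])
qed

lemma set_integrable_eta:
  fixes eta :: "real \<Rightarrow> real^3" and h :: "real \<Rightarrow> real"
  assumes sM: "sets M = sets (restrict_space borel Lam)"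
    and ec: "continuous_on {0..1} eta" and hi: "integrable M h"
  shows "set_integrable M {0..1} (\<lambda>x. h x *\<^sub>R eta x)"
proof -
  have "compact (eta ` {0..1})" using ec by (intro compact_continuous_image) auto
  then obtain B where B: "B > 0" "\<forall>y\<in>eta ` {0..1}. norm y \<le> B"
    using compact_imp_bounded bounded_pos by metis
  have m1: "(\<lambda>x. indicator {0..1} x *\<^sub>R eta x) \<in> borel_measurable M"
    by (rule borel_to_M[OF sM borel_measurable_continuous_on_indicator[OF _ ec]]) auto
  have hm: "h \<in> borel_measurable M" using hi by auto
  have m2: "(\<lambda>x. indicator {0..1} x *\<^sub>R (h x *\<^sub>R eta x)) \<in> borel_measurable M"
  proof -
    have "(\<lambda>x. h x *\<^sub>R (indicator {0..1} x *\<^sub>R eta x)) \<in> borel_measurable M"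
      by (rule borel_measurable_scaleR[OF hm m1])
    moreover have "(\<lambda>x. h x *\<^sub>R (indicator {0..1} x *\<^sub>R eta x)) = (\<lambda>x. indicator {0..1} x *\<^sub>R (h x *\<^sub>R eta x))"
      by (auto simp: fun_eq_iff)
    ultimately show ?thesis by simp
  qed
  have "integrable M (\<lambda>x. B * h x)" using hi by simp
  then have "integrable M (\<lambda>x. indicator {0..1} x *\<^sub>R (h x *\<^sub>R eta x))"
  proof (rule Bochner_Integration.integrable_bound[OF _ m2], intro AE_I2)
    fix x
    show "norm (indicator {0..1} x *\<^sub>R (h x *\<^sub>R eta x)) \<le> norm (B * h x)"
    proof (cases "x \<in> {0..1}")
      case True
      then have "norm (eta x) \<le> B" using B by auto
      then have "\<bar>h x\<bar> * norm (eta x) \<le> \<bar>h x\<bar> * B" by (intro mult_left_mono) auto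
      then show ?thesis using True B by (simp add: abs_mult mult.commute)
    qed simp
  qed
  then show ?thesis unfolding set_integrable_def .
qed


lemma ball_Lam_sets:
  assumes sM: "sets M = sets (restrict_space borel Lam)"
  shows "ball y r \<inter> Lam \<in> sets M"
proof -
  have "Lam \<inter> ball y r \<in> sets (restrict_space borel Lam)"
    unfolding sets_restrict_space by auto
  then show ?thesis using sM by (simp add: Int_commute)
qed

lemma supp_AE:
  fixes M :: "real measure"
  assumes sM: "sets M = sets (restrict_space borel Lam)" and spM: "space M = Lam"
    and supp: "msupp M = {0..1}"
  shows "AE x in M. x \<le> 1"
proof -
  have "\<forall>x\<in>{1<..}. \<exists>e. e > 0 \<and> emeasure M (ball x e \<inter> Lam) = 0"
  proof
    fix x :: real assume "x \<in> {1<..}"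
    then have "x \<notin> msupp M" using supp by auto
    then obtain e where "e > 0" "\<not> emeasure M (ball x e \<inter> space M) > 0"
      unfolding msupp_def by auto
    then show "\<exists>e. e > 0 \<and> emeasure M (ball x e \<inter> Lam) = 0" using spM by (auto simp: not_gr_zero)
  qed
  then obtain E where E: "\<And>x. x \<in> {1<..} \<Longrightarrow> E x > 0 \<and> emeasure M (ball x (E x) \<inter> Lam) = 0"
    by metis
  define F where "F = (\<lambda>x. ball x (E x)) ` {1<..}"
  obtain F' where F': "F' \<subseteq> F" "countable F'" "\<Union>F' = \<Union>F"
    using Lindelof[of F] unfolding F_def by auto
  have "(\<Union>B\<in>F'. B \<inter> Lam) \<in> null_sets M"
  proof (rule null_sets_UN'[OF F'(2)])
    fix B assume "B \<in> F'"
    then obtain y where y: "y \<in> {1<..}" "B = ball y (E y)" using F'(1) unfolding F_def by auto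
    show "B \<inter> Lam \<in> null_sets M" using E[OF y(1)] ball_Lam_sets[OF sM] y(2) by auto
  qed
  moreover have "{x \<in> space M. \<not> x \<le> 1} \<subseteq> (\<Union>B\<in>F'. B \<inter> Lam)"
  proof
    fix x assume x: "x \<in> {x \<in> space M. \<not> x \<le> 1}"
    then have "x \<in> ball x (E x)" using E[of x] by auto
    moreover have "x \<in> {1<..}" using x by auto
    ultimately have "x \<in> \<Union>F" unfolding F_def by blast
    then show "x \<in> (\<Union>B\<in>F'. B \<inter> Lam)" using F'(3) x spM by auto
  qed
  ultimately show ?thesis by (rule AE_I')
qed


lemma third_point:
  fixes p q :: real
  obtains z where "z \<in> {0..1}" "z \<noteq> p" "z \<noteq> q"
proof -
  have "\<exists>z\<in>{0, 1/2, 1::real}. z \<noteq> p \<and> z \<noteq> q" by auto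
  then obtain z where "z \<in> {0, 1/2, 1::real}" "z \<noteq> p" "z \<noteq> q" by blast
  then show ?thesis using that[of z] by auto
qed

lemma borel_Lam_sets:
  assumes sM: "sets M = sets (restrict_space borel Lam)" and A: "A \<in> sets borel"
  shows "A \<inter> Lam \<in> sets M"
proof -
  have "Lam \<inter> A \<in> sets (restrict_space borel Lam)"
    unfolding sets_restrict_space using A by auto
  then show ?thesis using sM by (simp add: Int_commute)
qed

lemma cyc_shape:
  assumes "cyclic_interval I" "interior I \<noteq> {}"
  obtains lo hi where "0 \<le> lo" "lo < hi" "hi \<le> 1"
    "({lo<..<hi} \<subseteq> I \<and> I \<subseteq> {lo..hi}) \<or> ({0..1} - {lo..hi} \<subseteq> I \<and> I \<subseteq> {0..1} - {lo<..<hi})"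
proof -
  obtain a b where ab: "a \<in> {0..1}" "b \<in> {0..1}"
    "I = cyc_cc a b \<or> I = cyc_oo a b \<or> I = cyc_co a b \<or> I = cyc_oc a b"
    using assms(1) unfolding cyclic_interval_def by blast
  show ?thesis
  proof (cases "a \<le> b")
    case True
    then have sub: "{a<..<b} \<subseteq> I \<and> I \<subseteq> {a..b}"
      using ab(3) by (auto simp: cyc_cc_def cyc_oo_def cyc_co_def cyc_oc_def)
    have "a \<noteq> b"
    proof
      assume "a = b"
      then have "interior I \<subseteq> interior {a..a}" using sub by (intro interior_mono) auto
      then show False using assms(2) by simp
    qed
    then show ?thesis using that[of a b] True ab sub by auto
  next
    case False
    then have sub: "{0..1} - {b..a} \<subseteq> I \<and> I \<subseteq> {0..1} - {b<..<a}"
      using ab by (auto simp: cyc_cc_def cyc_oo_def cyc_co_def cyc_oc_def)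
    then show ?thesis using that[of b a] False ab by auto
  qed
qed

lemma orient_self: "orient x y x = 0" "orient x y y = 0"
  unfolding orient_def by simp_all

theorem lemma4:
  fixes chi eta :: "real \<Rightarrow> real^3" and \<mu> :: "real measure" and f g :: "real \<Rightarrow> real"
  assumes chi_cont: "continuous_on Lam chi"
    and chi_bdd: "bounded (chi ` Lam)"
    and chi_nonneg: "\<forall>x\<in>Lam. \<forall>i. 0 \<le> chi x $ i"
    and chi_supp: "closure {x \<in> Lam. chi x \<noteq> 0} = {0..1}"
    and chi_nz: "\<forall>x\<in>{0<..<1}. chi x \<noteq> 0"
    and eta_cont: "continuous_on {0..1} eta"
    and eta_def: "\<forall>x\<in>{0<..<1}. eta x = (1 / (ones3 \<bullet> chi x)) *\<^sub>R chi x"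
    and P_int: "interior (Pcone chi) \<noteq> {}"
    and mu_sets: "sets \<mu> = sets (restrict_space borel Lam)"
    and mu_fin: "finite_measure \<mu>"
    and mt_one: "emeasure (mu_tilde chi \<mu>) Lam = 1"
    and mt_supp: "msupp (mu_tilde chi \<mu>) = {0..1}"
    and strict: "strictly_convex_locus chi eta"
    and f_int: "integrable (mu_tilde chi \<mu>) f"
    and g_int: "integrable (mu_tilde chi \<mu>) g"
    and f_one: "integral\<^sup>L (mu_tilde chi \<mu>) f = 1"
    and g_one: "integral\<^sup>L (mu_tilde chi \<mu>) g = 1"
    and sign: "changes_sign_twice (mu_tilde chi \<mu>) (\<lambda>x. f x - g x)"
  shows "c_mu chi eta \<mu> f \<noteq> c_mu chi eta \<mu> g"
proof
  assume eq: "c_mu chi eta \<mu> f = c_mu chi eta \<mu> g"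
  define M where "M = mu_tilde chi \<mu>"
  define u where "u = (\<lambda>x. f x - g x)"
  have spM: "space M = Lam" and sM: "sets M = sets (restrict_space borel Lam)"
    using M_facts[OF mu_sets] unfolding M_def by auto
  have fi: "integrable M f" and gi: "integrable M g" using f_int g_int unfolding M_def by auto
  have ui: "integrable M u" unfolding u_def using fi gi by auto
  have um[measurable]: "u \<in> borel_measurable M" using ui by auto
  have finM: "finite_measure M" using mt_one spM unfolding M_def by (intro finite_measureI) auto
  have etaA0: "eta y \<bullet> ones3 = 1" if y: "y \<in> {0<..<1}" for y
  proof -
    have "y \<in> Lam" using y unfolding Lam_def by auto
    then have nn: "\<forall>i. 0 \<le> chi y $ i" using chi_nonneg by auto
    have "chi y \<noteq> 0" using chi_nz y by auto
    then obtain i where "chi y $ i \<noteq> 0" by (auto simp: vec_eq_iff)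
    then have "chi y $ i > 0" using nn[rule_format, of i] by linarith
    moreover have "chi y $ 1 \<ge> 0" "chi y $ 2 \<ge> 0" "chi y $ 3 \<ge> 0" using nn by auto
    ultimately have "chi y \<bullet> ones3 > 0" unfolding inner_ones3 using exhaust_3[of i] by auto
    then show "eta y \<bullet> ones3 = 1" using eta_def y by (auto simp: inner_commute)
  qed
  have etaA: "eta x \<bullet> ones3 = 1" if "x \<in> {0..1}" for x
  proof (rule continuous_constant_on_closure[where S="{0<..<1}" and f="\<lambda>x. eta x \<bullet> ones3" and a=1])
    show "continuous_on (closure {0<..<1::real}) (\<lambda>x. eta x \<bullet> ones3)"
      using eta_cont by (simp add: continuous_intros)
    show "x \<in> closure {0<..<1::real}" using that by simp
    show "\<And>y. y \<in> {0<..<1} \<Longrightarrow> eta y \<bullet> ones3 = 1" by (rule etaA0)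
  qed
  have str: "\<And>a b l. a \<in> {0..1} \<Longrightarrow> b \<in> {0..1} \<Longrightarrow> l \<in> {0..1} \<Longrightarrow> a \<noteq> b \<Longrightarrow> a \<noteq> l \<Longrightarrow> b \<noteq> l
      \<Longrightarrow> eta l \<notin> closed_segment (eta a) (eta b)"
    using strict unfolding strictly_convex_locus_def by blast
  have inj: "eta p \<noteq> eta q" if "p \<in> {0..1}" "q \<in> {0..1}" "p \<noteq> q" for p q
  proof
    assume e: "eta p = eta q"
    obtain z where z: "z \<in> {0..1}" "z \<noteq> p" "z \<noteq> q" using third_point by blast
    have "eta q \<notin> closed_segment (eta p) (eta z)" using str[of p z q] that z by auto
    then show False using e by simp
  qed
  have nz: "\<forall>p\<in>{0..1}. \<forall>q\<in>{0..1}. \<forall>r\<in>{0..1}. p \<noteq> q \<and> p \<noteq> r \<and> q \<noteq> r \<longrightarrow> orient (eta p) (eta q) (eta r) \<noteq> 0"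
  proof (intro ballI impI notI)
    fix p q r assume pqr: "p \<in> {0..1}" "q \<in> {0..1}" "r \<in> {0..1}" "p \<noteq> q \<and> p \<noteq> r \<and> q \<noteq> r"
      and o: "orient (eta p) (eta q) (eta r) = 0"
    have "eta p \<noteq> eta q" using inj pqr by auto
    from collinear_seg[OF etaA[OF pqr(1)] etaA[OF pqr(2)] etaA[OF pqr(3)] this o] pqr
    show False using str[of p q r] str[of p r q] str[of r q p] by auto
  qed
  obtain s where s: "s = 1 \<or> s = -1"
    "\<And>p q r. 0 \<le> p \<Longrightarrow> p < q \<Longrightarrow> q < r \<Longrightarrow> r \<le> 1 \<Longrightarrow> s * orient (eta p) (eta q) (eta r) > 0"
    using orient_sign[OF eta_cont nz] by blast
  have Vint: "set_integrable M {0..1} (\<lambda>x. u x *\<^sub>R eta x)"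
    by (rule set_integrable_eta[OF sM eta_cont ui])
  have V0: "(LINT x:{0..1}|M. u x *\<^sub>R eta x) = 0"
  proof -
    have "(LINT x:{0..1}|M. u x *\<^sub>R eta x) = (LINT x:{0..1}|M. f x *\<^sub>R eta x - g x *\<^sub>R eta x)"
      unfolding u_def by (simp add: scaleR_left_diff_distrib)
    also have "\<dots> = c_mu chi eta \<mu> f - c_mu chi eta \<mu> g"
      unfolding c_mu_def M_def[symmetric]
      by (rule set_integral_diff(2)[OF set_integrable_eta[OF sM eta_cont fi] set_integrable_eta[OF sM eta_cont gi]])
    finally show ?thesis using eq by simp
  qed
  have key: "integrable M (\<lambda>x. indicator {0..1} x * (u x * (w \<bullet> eta x))) \<and>
      integral\<^sup>L M (\<lambda>x. indicator {0..1} x * (u x * (w \<bullet> eta x))) = 0" for w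
  proof -
    have bl: "bounded_linear (\<lambda>v. w \<bullet> v)" by (rule bounded_linear_inner_right)
    have Vi: "integrable M (\<lambda>x. indicator {0..1} x *\<^sub>R (u x *\<^sub>R eta x))"
      using Vint unfolding set_integrable_def .
    have eqf: "(\<lambda>x. w \<bullet> (indicator {0..1} x *\<^sub>R (u x *\<^sub>R eta x))) = (\<lambda>x. indicator {0..1} x * (u x * (w \<bullet> eta x)))"
      by (simp add: fun_eq_iff)
    have "integrable M (\<lambda>x. w \<bullet> (indicator {0..1} x *\<^sub>R (u x *\<^sub>R eta x)))"
      by (rule integrable_bounded_linear[OF bl Vi])
    moreover have "integral\<^sup>L M (\<lambda>x. w \<bullet> (indicator {0..1} x *\<^sub>R (u x *\<^sub>R eta x))) = w \<bullet> (LINT x:{0..1}|M. u x *\<^sub>R eta x)"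
      unfolding set_lebesgue_integral_def by (rule integral_bounded_linear[OF bl Vi])
    ultimately show ?thesis using V0 unfolding eqf by simp
  qed
  from sign have pos: "emeasure M {x \<in> space M. u x > 0} > 0" and
    "\<exists>I. cyclic_interval I \<and> interior I \<noteq> {} \<and> interior ({0..1} - I) \<noteq> {} \<and>
        (\<forall>x\<in>I \<inter> Lam. u x \<ge> 0) \<and> (\<forall>x\<in>({0..1} - I) \<inter> Lam. u x \<le> 0)"
    unfolding changes_sign_twice_def M_def u_def by auto
  then obtain I where I: "cyclic_interval I" "interior I \<noteq> {}"
    "\<forall>x\<in>I \<inter> Lam. u x \<ge> 0" "\<forall>x\<in>({0..1} - I) \<inter> Lam. u x \<le> 0" by blast
  obtain lo hi where lh: "0 \<le> lo" "lo < hi" "hi \<le> 1"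
    "({lo<..<hi} \<subseteq> I \<and> I \<subseteq> {lo..hi}) \<or> ({0..1} - {lo..hi} \<subseteq> I \<and> I \<subseteq> {0..1} - {lo<..<hi})"
    using cyc_shape[OF I(1,2)] by blast
  define ori where "ori = (\<lambda>x. orient (eta lo) (eta hi) (eta x))"
  have o_in: "s * ori x < 0" if "lo < x" "x < hi" for x
    using s(2)[of lo x hi] that lh orient_swap[of "eta lo" "eta hi" "eta x"] unfolding ori_def by auto
  have o_lo: "s * ori x > 0" if "0 \<le> x" "x < lo" for x
    using s(2)[of x lo hi] that lh orient_cyc[of "eta lo" "eta hi" "eta x"] unfolding ori_def by auto
  have o_hi: "s * ori x > 0" if "hi < x" "x \<le> 1" for x
    using s(2)[of lo hi x] that lh unfolding ori_def by auto
  have o_end: "ori lo = 0" "ori hi = 0" unfolding ori_def by (simp_all add: orient_self)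
  define \<epsilon> :: real where "\<epsilon> = (if {lo<..<hi} \<subseteq> I \<and> I \<subseteq> {lo..hi} then -1 else 1)"
  define w where "w = (\<epsilon> * s) *\<^sub>R linw (eta lo) (eta hi)"
  have Hw: "w \<bullet> eta x = \<epsilon> * s * ori x" if "x \<in> {0..1}" for x
    unfolding w_def ori_def using orient_lin[OF etaA[OF that]] by simp
  have uH: "u x * (w \<bullet> eta x) \<ge> 0" if x: "x \<in> {0..1}" "x \<in> Lam" for x
  proof (cases "{lo<..<hi} \<subseteq> I \<and> I \<subseteq> {lo..hi}")
    case True
    then have e: "\<epsilon> = -1" unfolding \<epsilon>_def by simp
    show ?thesis
    proof (cases "x \<in> I")
      case xI: True
      then have "u x \<ge> 0" using I(3) x by auto
      moreover have "x \<in> {lo..hi}" using True xI by auto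
      then have "- s * ori x \<ge> 0" using o_in[of x] o_end by (cases "x = lo \<or> x = hi") (auto simp: less_eq_real_def)
      ultimately show ?thesis using Hw[OF x(1)] e by (simp add: mult_nonneg_nonpos mult_nonneg_nonneg)
    next
      case xI: False
      then have "u x \<le> 0" using I(4) x by auto
      moreover have "x \<notin> {lo<..<hi}" using True xI by auto
      then have "- s * ori x \<le> 0" using o_lo[of x] o_hi[of x] o_end x by (cases "x = lo \<or> x = hi") (auto simp: not_less less_eq_real_def)
      ultimately show ?thesis using Hw[OF x(1)] e by (simp add: mult_nonpos_nonpos mult_nonpos_nonneg)
    qed
  next
    case False
    then have e: "\<epsilon> = 1" and B: "{0..1} - {lo..hi} \<subseteq> I \<and> I \<subseteq> {0..1} - {lo<..<hi}" using lh(4) unfolding \<epsilon>_def by auto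
    show ?thesis
    proof (cases "x \<in> I")
      case xI: True
      then have "u x \<ge> 0" using I(3) x by auto
      moreover have "x \<notin> {lo<..<hi}" using B xI by auto
      then have "s * ori x \<ge> 0" using o_lo[of x] o_hi[of x] o_end x by (cases "x = lo \<or> x = hi") (auto simp: not_less less_eq_real_def)
      ultimately show ?thesis using Hw[OF x(1)] e by (simp add: mult_nonneg_nonpos mult_nonneg_nonneg)
    next
      case xI: False
      then have "u x \<le> 0" using I(4) x by auto
      moreover have "x \<in> {lo..hi}" using B xI x by auto
      then have "s * ori x \<le> 0" using o_in[of x] o_end by (cases "x = lo \<or> x = hi") (auto simp: less_eq_real_def)
      ultimately show ?thesis using Hw[OF x(1)] e by (simp add: mult_nonpos_nonpos mult_nonpos_nonneg)
    qed
  qed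
  have Hnz: "w \<bullet> eta x \<noteq> 0" if "x \<in> {0..1}" "x \<noteq> lo" "x \<noteq> hi" for x
  proof -
    have "\<epsilon> \<noteq> 0" unfolding \<epsilon>_def by simp
    moreover have "ori x \<noteq> 0" using nz lh that unfolding ori_def by auto
    moreover have "s \<noteq> 0" using s(1) by auto
    ultimately show ?thesis using Hw[OF that(1)] by simp
  qed
  have "AE x in M. indicator {0..1} x * (u x * (w \<bullet> eta x)) = 0"
  proof (subst integral_nonneg_eq_0_iff_AE[symmetric])
    show "integrable M (\<lambda>x. indicator {0..1} x * (u x * (w \<bullet> eta x)))" using key by blast
    show "AE x in M. 0 \<le> indicator {0..1} x * (u x * (w \<bullet> eta x))"
      using uH spM by (intro AE_I2) (auto simp: indicator_def)
    show "integral\<^sup>L M (\<lambda>x. indicator {0..1} x * (u x * (w \<bullet> eta x))) = 0" using key by blast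
  qed
  then have Z1: "AE x in M. x \<in> {0..1} \<and> x \<noteq> lo \<and> x \<noteq> hi \<longrightarrow> u x = 0"
    by eventually_elim (use Hnz in auto)
  have le1: "AE x in M. x \<le> 1" using supp_AE[OF sM spM] mt_supp unfolding M_def by blast
  have Z2: "AE x in M. x = lo \<or> x = hi \<or> u x = 0"
    using Z1 le1 AE_space by eventually_elim (use spM in \<open>auto simp: Lam_def\<close>)
  have atom: "u e1 = 0 \<or> measure M ({e1} \<inter> Lam) = 0"
    if e: "e1 \<in> {lo, hi}" "e2 \<in> {lo, hi}" "e1 \<noteq> e2" for e1 e2
  proof -
    have e01: "e1 \<in> {0..1}" "e2 \<in> {0..1}" using e lh by auto
    obtain z where z: "z \<in> {0..1}" "z \<noteq> e1" "z \<noteq> e2" using third_point by blast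
    define w2 where "w2 = linw (eta e2) (eta z)"
    have Kx: "w2 \<bullet> eta x = orient (eta e2) (eta z) (eta x)" if "x \<in> {0..1}" for x
      unfolding w2_def using orient_lin[OF etaA[OF that]] by simp
    have K2: "w2 \<bullet> eta e2 = 0" using Kx[OF e01(2)] by (simp add: orient_self)
    have K1: "w2 \<bullet> eta e1 \<noteq> 0" using Kx[OF e01(1)] nz e01 z e(3) by auto
    define c where "c = u e1 * (w2 \<bullet> eta e1)"
    have A1: "{e1} \<inter> Lam \<in> sets M" by (rule borel_Lam_sets[OF sM]) auto
    have "AE x in M. indicator {0..1} x * (u x * (w2 \<bullet> eta x)) = indicator ({e1} \<inter> Lam) x * c"
      using Z2 AE_space
    proof eventually_elim
      case (elim x)
      then have xL: "x \<in> Lam" using spM by auto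
      show ?case
      proof (cases "x = e1")
        case True then show ?thesis using e01 xL unfolding c_def by (simp add: indicator_def)
      next
        case False
        then have "x = e2 \<or> u x = 0" using elim e by auto
        then show ?thesis using False K2 by (auto simp: indicator_def)
      qed
    qed
    then have "integral\<^sup>L M (\<lambda>x. indicator {0..1} x * (u x * (w2 \<bullet> eta x))) = integral\<^sup>L M (\<lambda>x. indicator ({e1} \<inter> Lam) x * c)"
    proof (rule integral_cong_AE[rotated 2])
      show "(\<lambda>x. indicator {0..1} x * (u x * (w2 \<bullet> eta x))) \<in> borel_measurable M"
        using key[of w2] by auto
      show "(\<lambda>x. indicator ({e1} \<inter> Lam) x * c) \<in> borel_measurable M"
        using A1 by measurable
    qed
    then have "measure M ({e1} \<inter> Lam) * c = 0"
      using key[of w2] A1 spM by simp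
    then show ?thesis unfolding c_def using K1 by auto
  qed
  have Z3: "AE x in M. x \<noteq> e \<or> u x = 0" if "e \<in> {lo, hi}" for e
  proof -
    obtain e' where e': "e' \<in> {lo, hi}" "e \<noteq> e'" using that lh by auto
    show ?thesis
    proof (cases "u e = 0")
      case True then show ?thesis by (intro AE_I2) auto
    next
      case False
      then have m0: "measure M ({e} \<inter> Lam) = 0" using atom[OF that e'] by auto
      have A1: "{e} \<inter> Lam \<in> sets M" by (rule borel_Lam_sets[OF sM]) auto
      have "emeasure M ({e} \<inter> Lam) = 0"
        using finite_measure.emeasure_eq_measure[OF finM] m0 by simp
      then have "{e} \<inter> Lam \<in> null_sets M" using A1 by auto
      then show ?thesis by (rule AE_I') (use spM in auto)
    qed
  qed
  have Zlo: "AE x in M. x \<noteq> lo \<or> u x = 0" by (rule Z3) simp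
  have Zhi: "AE x in M. x \<noteq> hi \<or> u x = 0" by (rule Z3) simp
  have "AE x in M. u x = 0"
    using Z2 Zlo Zhi by eventually_elim auto
  then have "AE x in M. \<not> u x > 0" by eventually_elim auto
  moreover have "{x \<in> space M. u x > 0} \<in> sets M" by measurable
  ultimately have "emeasure M {x \<in> space M. u x > 0} = 0"
    using AE_iff_measurable[of "{x \<in> space M. u x > 0}" M "\<lambda>x. \<not> u x > 0"] by auto
  then show False using pos by simp
qed

end
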